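(* Let $A(n)$ be the number of alternating permutations of $[n]$ and $A_0(2m)$ the number of cyclically alternating permutations of $[2m]$. Then $$\frac{A_0(2m)}{A(2m)}\to\frac{\pi}{4}\quad\text{as } m\to\infty.$$
   Context: $[n]=\{1,2,\ldots,n\}$. A permutation $\sigma$ of $[n]$ is alternating if $\sigma(i)<\sigma(i+1)$ for odd $i$ and $\sigma(i)>\sigma(i+1)$ for even $i$, $1\le i\le n-1$. For $n$ even, $\sigma$ is cyclically alternating if it is alternating and $\sigma(n)>\sigma(1)$. *)

theory Defs
  imports "HOL-Analysis.Analysis" "HOL-Combinatorics.Permutations"
begin

definition alternating :: "nat \<Rightarrow> (nat \<Rightarrow> nat) \<Rightarrow> bool" where
  "alternating n \<sigma> \<longleftrightarrow>
     (\<forall>i. 1 \<le> i \<and> i \<le> n - 1 \<longrightarrow>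
        (odd i \<longrightarrow> \<sigma> i < \<sigma> (i + 1)) \<and> (even i \<longrightarrow> \<sigma> i > \<sigma> (i + 1)))"

definition cyc_alternating :: "nat \<Rightarrow> (nat \<Rightarrow> nat) \<Rightarrow> bool" where
  "cyc_alternating n \<sigma> \<longleftrightarrow> alternating n \<sigma> \<and> \<sigma> n > \<sigma> 1"

definition A :: "nat \<Rightarrow> nat" where
  "A n = card {\<sigma>. \<sigma> permutes {1..n} \<and> alternating n \<sigma>}"

definition A0 :: "nat \<Rightarrow> nat" where
  "A0 n = card {\<sigma>. \<sigma> permutes {1..n} \<and> cyc_alternating n \<sigma>}"

end

theory Submission
  imports Defs "HOL-Complex_Analysis.Complex_Analysis"
begin

definition altl :: "nat list \<Rightarrow> bool" where
  "altl xs \<longleftrightarrow> (\<forall>i. Suc i < length xs \<longrightarrow>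
      (even i \<longrightarrow> xs!i < xs!Suc i) \<and> (odd i \<longrightarrow> xs!Suc i < xs!i))"

lemma altl_prefix: "altl (as @ bs) \<Longrightarrow> altl as"
  unfolding altl_def
proof (intro allI impI)
  fix i assume H: "\<forall>i. Suc i < length (as @ bs) \<longrightarrow>
      (even i \<longrightarrow> (as @ bs)!i < (as @ bs)!Suc i) \<and> (odd i \<longrightarrow> (as @ bs)!Suc i < (as @ bs)!i)"
    and i: "Suc i < length as"
  from H[rule_format, of i] i
  show "(even i \<longrightarrow> as!i < as!Suc i) \<and> (odd i \<longrightarrow> as!Suc i < as!i)"
    by (simp add: nth_append)
qed

lemma altl_append_even:
  assumes ev: "even (length as)"
  shows "altl (as @ bs) \<longleftrightarrow> altl as \<and> altl bs \<and> (as \<noteq> [] \<longrightarrow> bs \<noteq> [] \<longrightarrow> hd bs < last as)"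
proof
  assume H: "altl (as @ bs)"
  have 1: "altl as" using H altl_prefix by blast
  have 2: "altl bs" unfolding altl_def
  proof (intro allI impI)
    fix i assume i: "Suc i < length bs"
    from H[unfolded altl_def, rule_format, of "length as + i"] i ev
    show "(even i \<longrightarrow> bs!i < bs!Suc i) \<and> (odd i \<longrightarrow> bs!Suc i < bs!i)"
      by (simp add: nth_append)
  qed
  have 3: "hd bs < last as" if ne: "as \<noteq> []" "bs \<noteq> []"
  proof -
    define i where "i = length as - 1"
    have si: "Suc i = length as" using ne i_def by (cases as) auto
    have oi: "odd i" using si ev by (metis even_Suc)
    have "Suc i < length (as @ bs)" using si ne by simp
    from H[unfolded altl_def, rule_format, OF this] oi
    have "(as @ bs)!Suc i < (as @ bs)!i" by simp
    moreover have "(as @ bs)!Suc i = hd bs" using si ne by (simp add: nth_append hd_conv_nth)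
    moreover have "(as @ bs)!i = last as" using si ne
      by (simp add: nth_append last_conv_nth i_def)
    ultimately show ?thesis by simp
  qed
  show "altl as \<and> altl bs \<and> (as \<noteq> [] \<longrightarrow> bs \<noteq> [] \<longrightarrow> hd bs < last as)"
    using 1 2 3 by blast
next
  assume H: "altl as \<and> altl bs \<and> (as \<noteq> [] \<longrightarrow> bs \<noteq> [] \<longrightarrow> hd bs < last as)"
  show "altl (as @ bs)" unfolding altl_def
  proof (intro allI impI)
    fix i assume i: "Suc i < length (as @ bs)"
    show "(even i \<longrightarrow> (as @ bs)!i < (as @ bs)!Suc i) \<and> (odd i \<longrightarrow> (as @ bs)!Suc i < (as @ bs)!i)"
    proof (cases "Suc i < length as")
      case True
      then show ?thesis using H[THEN conjunct1, unfolded altl_def, rule_format, of i]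
        by (simp add: nth_append)
    next
      case False
      show ?thesis
      proof (cases "Suc i = length as")
        case True
        have ne: "as \<noteq> []" "bs \<noteq> []" using True i by auto
        have oi: "odd i" using True ev by (metis even_Suc)
        have "(as @ bs)!Suc i = hd bs" using True ne by (simp add: nth_append hd_conv_nth)
        moreover have "(as @ bs)!i = last as"
        proof -
          have "i = length as - 1" using True by simp
          then show ?thesis using True ne by (simp add: nth_append last_conv_nth)
        qed
        ultimately show ?thesis using H ne oi by simp
      next
        case False
        with \<open>\<not> Suc i < length as\<close> have "length as \<le> i" by simp
        then obtain j where j: "i = length as + j" by (auto simp: le_iff_add)
        have "Suc j < length bs" using i j by simp
        from H[THEN conjunct2, THEN conjunct1, unfolded altl_def, rule_format, OF this] j ev
        show ?thesis by (simp add: nth_append)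
      qed
    qed
  qed
qed

lemma altl_snoc_max:
  assumes "\<forall>x\<in>set ys. x < M" "ys = [] \<or> odd (length ys)"
  shows "altl (ys @ [M]) \<longleftrightarrow> altl ys"
proof
  assume "altl (ys @ [M])" then show "altl ys" using altl_prefix by blast
next
  assume H: "altl ys"
  show "altl (ys @ [M])" unfolding altl_def
  proof (intro allI impI)
    fix i assume i: "Suc i < length (ys @ [M])"
    show "(even i \<longrightarrow> (ys @ [M])!i < (ys @ [M])!Suc i) \<and> (odd i \<longrightarrow> (ys @ [M])!Suc i < (ys @ [M])!i)"
    proof (cases "Suc i < length ys")
      case True
      then show ?thesis using H[unfolded altl_def, rule_format, of i]
        by (simp add: nth_append)
    next
      case False
      then have si: "Suc i = length ys" using i by simp
      have "odd (length ys)" using assms(2) si by auto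
      then have "even i" using si by (metis even_Suc)
      moreover have "ys ! i \<in> set ys" using si by simp
      ultimately show ?thesis using si assms(1) by (simp add: nth_append)
    qed
  qed
qed

lemma altl_max_pos:
  assumes "\<forall>x\<in>set ys \<union> set zs. x < M" "altl (ys @ M # zs)"
  shows "odd (length ys) \<or> (ys = [] \<and> zs = [])"
proof (rule ccontr)
  assume C: "\<not> (odd (length ys) \<or> (ys = [] \<and> zs = []))"
  show False
  proof (cases "ys = []")
    case True
    then have "zs \<noteq> []" using C by auto
    then have "Suc 0 < length (ys @ M # zs)" using True by simp
    from assms(2)[unfolded altl_def, rule_format, OF this] True \<open>zs \<noteq> []\<close>
    have "M < hd zs" by (simp add: hd_conv_nth)
    moreover have "hd zs \<in> set zs" using \<open>zs \<noteq> []\<close> by simp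
    moreover have "hd zs < M" using assms(1) \<open>hd zs \<in> set zs\<close> by blast
    ultimately show False by simp
  next
    case False
    then have ev: "even (length ys)" and ne: "ys \<noteq> []" using C by auto
    define i where "i = length ys - 1"
    have si: "Suc i = length ys" using ne i_def by (cases ys) auto
    have oi: "odd i" using si ev by (metis even_Suc)
    have "Suc i < length (ys @ M # zs)" using si by simp
    from assms(2)[unfolded altl_def, rule_format, OF this] oi si
    have "M < ys ! i" by (simp add: nth_append)
    moreover have "ys ! i \<in> set ys" using si by simp
    moreover have "ys ! i < M" using assms(1) \<open>ys ! i \<in> set ys\<close> by blast
    ultimately show False by simp
  qed
qed

lemma altl_decomp:
  assumes "\<forall>x\<in>set ys \<union> set zs. x < M" "odd (length ys)"
  shows "altl (ys @ M # zs) \<longleftrightarrow> altl ys \<and> altl zs"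
proof -
  have e: "ys @ M # zs = (ys @ [M]) @ zs" by simp
  have ev: "even (length (ys @ [M]))" using assms(2) by simp
  have "hd zs < M" if "zs \<noteq> []" using that assms(1) by auto
  then show ?thesis
    unfolding e altl_append_even[OF ev] using altl_snoc_max[of ys M] assms by auto
qed

lemma altl_cyc:
  assumes "\<forall>x\<in>set ys \<union> set zs. x < M" "odd (length ys)" "even (length zs)"
  shows "(altl (ys @ M # zs) \<and> hd (ys @ M # zs) < last (ys @ M # zs)) \<longleftrightarrow> altl (zs @ ys)"
proof -
  have ne: "ys \<noteq> []" using assms(2) by auto
  have h: "hd (ys @ M # zs) = hd ys" using ne by simp
  have l: "last (ys @ M # zs) = (if zs = [] then M else last zs)" by simp
  have "hd ys < M" using ne assms(1) by auto
  then show ?thesis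
    unfolding altl_decomp[OF assms(1,2)] altl_append_even[OF assms(3)] h l
    using ne by auto
qed

definition Lset :: "nat set \<Rightarrow> nat list set" where
  "Lset S = {xs. set xs = S \<and> distinct xs \<and> altl xs}"

lemma finite_Lset: "finite (Lset S)"
proof (cases "finite S")
  case True
  have "Lset S \<subseteq> {xs. set xs \<subseteq> S \<and> length xs = card S}"
    unfolding Lset_def using distinct_card by fastforce
  then show ?thesis using finite_lists_length_eq[OF True] by (rule finite_subset)
next
  case False
  then have "Lset S = {}" unfolding Lset_def by auto
  then show ?thesis by simp
qed

function g :: "nat \<Rightarrow> nat" where
  "g 0 = 1"
| "g (Suc n) = (if n = 0 then 1 else
      (\<Sum>k\<in>{k. k \<le> n \<and> odd k}. (n choose k) * g k * g (n - k)))"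
  by pat_completeness auto
termination by (relation "Wellfounded.measure id") auto

lemma card_Lset: "finite S \<Longrightarrow> card (Lset S) = g (card S)"
proof (induction "card S" arbitrary: S rule: less_induct)
  case less
  show ?case
  proof (cases "card S")
    case 0
    then have "S = {}" using less.prems by simp
    then have "Lset S = {[]}" unfolding Lset_def altl_def by auto
    then show ?thesis using 0 by simp
  next
    case (Suc n)
    define M where "M = Max S"
    define S' where "S' = S - {M}"
    have neS: "S \<noteq> {}" using Suc by auto
    have MS: "M \<in> S" unfolding M_def using neS less.prems by simp
    have ltM: "\<forall>x\<in>S'. x < M"
    proof
      fix x assume "x \<in> S'"
      then have "x \<in> S" "x \<noteq> M" by (auto simp: S'_def)
      moreover have "x \<le> M" unfolding M_def using less.prems \<open>x \<in> S\<close> by simp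
      ultimately show "x < M" by simp
    qed
    have fS': "finite S'" using less.prems S'_def by simp
    have cS': "card S' = n" using Suc MS less.prems unfolding S'_def by simp
    show ?thesis
    proof (cases "n = 0")
      case True
      then have "S' = {}" using cS' fS' by simp
      then have "S = {M}" using MS unfolding S'_def by auto
      have "Lset S = {[M]}"
      proof
        show "Lset S \<subseteq> {[M]}"
        proof
          fix xs assume "xs \<in> Lset S"
          then have h: "set xs = {M}" "distinct xs" unfolding Lset_def \<open>S = {M}\<close> by auto
          then have "length xs = 1" using distinct_card[of xs] by simp
          then obtain x where "xs = [x]" by (auto simp: length_Suc_conv)
          then show "xs \<in> {[M]}" using h by simp
        qed
        show "{[M]} \<subseteq> Lset S" unfolding Lset_def altl_def \<open>S = {M}\<close> by simp
      qed
      then show ?thesis using Suc True by simp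
    next
      case False
      define D where "D = Sigma {T. T \<subseteq> S' \<and> odd (card T)} (\<lambda>T. Lset T \<times> Lset (S' - T))"
      define \<Phi> where "\<Phi> = (\<lambda>(T::nat set, (ys::nat list, zs::nat list)). ys @ M # zs)"
      have img: "Lset S = \<Phi> ` D"
      proof
        show "\<Phi> ` D \<subseteq> Lset S"
        proof
          fix xs assume "xs \<in> \<Phi> ` D"
          then obtain T ys zs where T: "T \<subseteq> S'" "odd (card T)" and ys: "ys \<in> Lset T"
            and zs: "zs \<in> Lset (S' - T)" and xs: "xs = ys @ M # zs"
            unfolding D_def \<Phi>_def by auto
          have sy: "set ys = T" "distinct ys" "altl ys" using ys unfolding Lset_def by auto
          have sz: "set zs = S' - T" "distinct zs" "altl zs" using zs unfolding Lset_def by auto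
          have lt: "\<forall>x\<in>set ys \<union> set zs. x < M" using sy sz T ltM by auto
          have ol: "odd (length ys)" using T sy distinct_card by metis
          have "set xs = S" using xs sy sz T MS unfolding S'_def by auto
          moreover have "distinct xs" using xs sy sz T lt by auto
          moreover have "altl xs" using xs altl_decomp[OF lt ol] sy sz by simp
          ultimately show "xs \<in> Lset S" unfolding Lset_def by simp
        qed
      next
        show "Lset S \<subseteq> \<Phi> ` D"
        proof
          fix xs assume xs: "xs \<in> Lset S"
          then have sx: "set xs = S" "distinct xs" "altl xs" unfolding Lset_def by auto
          then obtain ys zs where e: "xs = ys @ M # zs" using MS split_list by metis
          have Mn: "M \<notin> set ys" "M \<notin> set zs" using sx e by auto
          have sub: "set ys \<subseteq> S'" "set zs \<subseteq> S'" using sx e Mn unfolding S'_def by auto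
          have lt: "\<forall>x\<in>set ys \<union> set zs. x < M" using sub ltM by auto
          have "odd (length ys) \<or> (ys = [] \<and> zs = [])" using altl_max_pos[OF lt] sx e by simp
          moreover have "\<not> (ys = [] \<and> zs = [])"
          proof
            assume "ys = [] \<and> zs = []"
            then have "S = {M}" using sx e by simp
            then show False using cS' False unfolding S'_def by simp
          qed
          ultimately have ol: "odd (length ys)" by blast
          have dy: "distinct ys" "distinct zs" "set ys \<inter> set zs = {}" using sx e by auto
          have szs: "set zs = S' - set ys" using sx e dy Mn unfolding S'_def by auto
          have alt: "altl ys" "altl zs" using altl_decomp[OF lt ol] sx e by auto
          have "card (set ys) = length ys" using dy distinct_card by blast
          then have "(set ys, (ys, zs)) \<in> D" unfolding D_def Lset_def
            using sub dy szs alt ol by simp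
          moreover have "xs = \<Phi> (set ys, (ys, zs))" unfolding \<Phi>_def e by simp
          ultimately show "xs \<in> \<Phi> ` D" by blast
        qed
      qed
      have inj: "inj_on \<Phi> D"
      proof (rule inj_onI)
        fix p q assume p: "p \<in> D" and q: "q \<in> D" and eq: "\<Phi> p = \<Phi> q"
        obtain T ys zs where pe: "p = (T, (ys, zs))" by (metis prod.collapse)
        obtain T' ys' zs' where qe: "q = (T', (ys', zs'))" by (metis prod.collapse)
        have "set ys = T" "set ys' = T'" "T \<subseteq> S'" "T' \<subseteq> S'" "set zs \<subseteq> S'"
          using p q pe qe unfolding D_def Lset_def by auto
        then have "M \<notin> set ys" "M \<notin> set zs" unfolding S'_def by auto
        moreover have "ys @ M # zs = ys' @ M # zs'" using eq pe qe unfolding \<Phi>_def by simp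
        ultimately have "ys = ys' \<and> zs = zs'" using append_Cons_eq_iff by metis
        then show "p = q" using pe qe \<open>set ys = T\<close> \<open>set ys' = T'\<close> by simp
      qed
      have fT: "finite {T. T \<subseteq> S' \<and> odd (card T)}" using fS' by simp
      have "card (Lset S) = card D" by (simp add: img card_image[OF inj])
      also have "\<dots> = (\<Sum>T\<in>{T. T \<subseteq> S' \<and> odd (card T)}. card (Lset T) * card (Lset (S' - T)))"
        unfolding D_def using fT finite_Lset by (simp add: card_cartesian_product)
      also have "\<dots> = (\<Sum>T\<in>{T. T \<subseteq> S' \<and> odd (card T)}. g (card T) * g (n - card T))"
      proof (rule sum.cong[OF refl])
        fix T assume T: "T \<in> {T. T \<subseteq> S' \<and> odd (card T)}"
        then have fT: "finite T" using fS' finite_subset by blast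
        have c1: "card T < card S" proof -
          have "card T \<le> n" using T cS' card_mono[OF fS'] by auto
          then show ?thesis using Suc by simp
        qed
        have c2: "card (S' - T) = n - card T" using T fS' cS' by (simp add: card_Diff_subset fT)
        have c3: "card (S' - T) < card S" using c2 Suc by simp
        show "card (Lset T) * card (Lset (S' - T)) = g (card T) * g (n - card T)"
          using less.hyps[OF c1 fT] less.hyps[OF c3] fS' c2 by simp
      qed
      also have "\<dots> = (\<Sum>k\<in>{k. k \<le> n \<and> odd k}.
                   (\<Sum>T\<in>{T \<in> {T. T \<subseteq> S' \<and> odd (card T)}. card T = k}. g (card T) * g (n - card T)))"
        proof (rule sum.group[symmetric])
        show "finite {k. k \<le> n \<and> odd k}" by simp
        show "card ` {T. T \<subseteq> S' \<and> odd (card T)} \<subseteq> {k. k \<le> n \<and> odd k}"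
          using card_mono[OF fS'] cS' by auto
      qed (rule fT)
      also have "\<dots> = (\<Sum>k\<in>{k. k \<le> n \<and> odd k}. (n choose k) * g k * g (n - k))"
      proof (rule sum.cong[OF refl])
        fix k assume k: "k \<in> {k. k \<le> n \<and> odd k}"
        have "{T \<in> {T. T \<subseteq> S' \<and> odd (card T)}. card T = k} = {T. T \<subseteq> S' \<and> card T = k}"
          using k by auto
        moreover have "card {T. T \<subseteq> S' \<and> card T = k} = n choose k"
          using n_subsets[OF fS'] cS' by simp
        ultimately show "(\<Sum>T\<in>{T \<in> {T. T \<subseteq> S' \<and> odd (card T)}. card T = k}. g (card T) * g (n - card T))
            = (n choose k) * g k * g (n - k)" by simp
      qed
      also have "\<dots> = g (card S)" by (simp only: Suc g.simps(2) if_not_P[OF False])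
      finally show ?thesis .
    qed
  qed
qed

lemma alternating_iff: "alternating n \<sigma> \<longleftrightarrow> altl (map \<sigma> [1..<Suc n])"
proof
  assume H: "alternating n \<sigma>"
  show "altl (map \<sigma> [1..<Suc n])" unfolding altl_def
  proof (intro allI impI)
    fix i assume i: "Suc i < length (map \<sigma> [1..<Suc n])"
    then have i': "Suc i < n" by (simp del: upt_Suc)
    have "1 \<le> Suc i \<and> Suc i \<le> n - 1" using i' by simp
    from H[unfolded alternating_def, rule_format, OF this] i'
    show "(even i \<longrightarrow> map \<sigma> [1..<Suc n] ! i < map \<sigma> [1..<Suc n] ! Suc i) \<and>
          (odd i \<longrightarrow> map \<sigma> [1..<Suc n] ! Suc i < map \<sigma> [1..<Suc n] ! i)"
      by (simp add: nth_map_upt del: upt_Suc)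
  qed
next
  assume H: "altl (map \<sigma> [1..<Suc n])"
  show "alternating n \<sigma>" unfolding alternating_def
  proof (intro allI impI)
    fix i assume i: "1 \<le> i \<and> i \<le> n - 1"
    then obtain j where j: "i = Suc j" and j': "Suc j < n" by (cases i) auto
    from H[unfolded altl_def, rule_format, of j] j'
    show "(odd i \<longrightarrow> \<sigma> i < \<sigma> (i + 1)) \<and> (even i \<longrightarrow> \<sigma> (i + 1) < \<sigma> i)"
      using j by (simp add: nth_map_upt del: upt_Suc)
  qed
qed

lemma perm_list_card:
  "card {\<sigma>. \<sigma> permutes {1..n} \<and> P (map \<sigma> [1..<Suc n])}
   = card {xs. set xs = {1..n} \<and> distinct xs \<and> P xs}"
proof -
  let ?f = "\<lambda>\<sigma>. map \<sigma> [1..<Suc n]"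
  have inj: "inj_on ?f {\<sigma>. \<sigma> permutes {1..n} \<and> P (map \<sigma> [1..<Suc n])}"
  proof (rule inj_onI)
    fix \<sigma> \<tau> assume s: "\<sigma> \<in> {\<sigma>. \<sigma> permutes {1..n} \<and> P (map \<sigma> [1..<Suc n])}"
      and t: "\<tau> \<in> {\<sigma>. \<sigma> permutes {1..n} \<and> P (map \<sigma> [1..<Suc n])}" and eq: "?f \<sigma> = ?f \<tau>"
    show "\<sigma> = \<tau>"
    proof
      fix x show "\<sigma> x = \<tau> x"
      proof (cases "x \<in> {1..n}")
        case True
        then have "x \<in> set [1..<Suc n]" by auto
        then show ?thesis using eq map_eq_conv by metis
      next
        case False
        then show ?thesis using s t permutes_not_in[of \<sigma> "{1..n}" x] permutes_not_in[of \<tau> "{1..n}" x] by simp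
      qed
    qed
  qed
  have img: "?f ` {\<sigma>. \<sigma> permutes {1..n} \<and> P (map \<sigma> [1..<Suc n])}
      = {xs. set xs = {1..n} \<and> distinct xs \<and> P xs}"
  proof
    show "?f ` {\<sigma>. \<sigma> permutes {1..n} \<and> P (map \<sigma> [1..<Suc n])}
      \<subseteq> {xs. set xs = {1..n} \<and> distinct xs \<and> P xs}"
    proof
      fix xs assume "xs \<in> ?f ` {\<sigma>. \<sigma> permutes {1..n} \<and> P (map \<sigma> [1..<Suc n])}"
      then obtain \<sigma> where s: "\<sigma> permutes {1..n}" "P (map \<sigma> [1..<Suc n])" and xs: "xs = ?f \<sigma>"
        by auto
      have st: "set [1..<Suc n] = {1..n}" by auto
      have "set xs = {1..n}" using xs permutes_image[OF s(1)] st by simp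
      moreover have "distinct xs" using xs permutes_inj_on[OF s(1)] by (simp add: distinct_map)
      ultimately show "xs \<in> {xs. set xs = {1..n} \<and> distinct xs \<and> P xs}" using s xs by simp
    qed
  next
    show "{xs. set xs = {1..n} \<and> distinct xs \<and> P xs}
      \<subseteq> ?f ` {\<sigma>. \<sigma> permutes {1..n} \<and> P (map \<sigma> [1..<Suc n])}"
    proof
      fix xs assume "xs \<in> {xs. set xs = {1..n} \<and> distinct xs \<and> P xs}"
      then have xs: "set xs = {1..n}" "distinct xs" "P xs" by auto
      have len: "length xs = n" using distinct_card[OF xs(2)] xs(1) by simp
      define \<sigma> where "\<sigma> = (\<lambda>i. if i \<in> {1..n} then xs ! (i - 1) else i)"
      have m: "map \<sigma> [1..<Suc n] = xs"
        by (rule nth_equalityI) (auto simp: len \<sigma>_def nth_map_upt simp del: upt_Suc)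
      have injs: "inj_on \<sigma> {1..n}"
      proof (rule inj_onI)
        fix i j assume i: "i \<in> {1..n}" and j: "j \<in> {1..n}" and e: "\<sigma> i = \<sigma> j"
        then have "xs ! (i - 1) = xs ! (j - 1)" by (simp add: \<sigma>_def)
        then have "i - 1 = j - 1" using nth_eq_iff_index_eq[OF xs(2)] i j len by auto
        then show "i = j" using i j by auto
      qed
      have ims: "\<sigma> ` {1..n} = {1..n}"
      proof -
        have su: "set [1..<Suc n] = {1..n}" by (simp only: set_upt) auto
        have "set xs = \<sigma> ` {1..n}" unfolding m[symmetric] set_map su by (rule refl)
        then show ?thesis using xs(1) by simp
      qed
      have "\<sigma> permutes {1..n}"
      proof (rule bij_imp_permutes)
        show "bij_betw \<sigma> {1..n} {1..n}" unfolding bij_betw_def using injs ims by blast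
        show "\<And>x. x \<notin> {1..n} \<Longrightarrow> \<sigma> x = x" unfolding \<sigma>_def by auto
      qed
      then show "xs \<in> ?f ` {\<sigma>. \<sigma> permutes {1..n} \<and> P (map \<sigma> [1..<Suc n])}"
        using m xs(3) by (metis (mono_tags, lifting) image_eqI mem_Collect_eq)
    qed
  qed
  show ?thesis using card_image[OF inj] img by simp
qed

lemma A_eq: "A n = g n"
proof -
  have "A n = card {xs. set xs = {1..n} \<and> distinct xs \<and> altl xs}"
    unfolding A_def alternating_iff by (rule perm_list_card)
  also have "\<dots> = card (Lset {1..n})" unfolding Lset_def by simp
  also have "\<dots> = g n" using card_Lset[of "{1..n}"] by simp
  finally show ?thesis .
qed

lemma A0_eq_list:
  assumes "1 \<le> n"
  shows "A0 n = card {xs. set xs = {1..n} \<and> distinct xs \<and> (altl xs \<and> hd xs < last xs)}"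
proof -
  have "\<And>\<sigma>. cyc_alternating n \<sigma> \<longleftrightarrow>
     (\<lambda>xs. altl xs \<and> hd xs < last xs) (map \<sigma> [1..<Suc n])"
  proof -
    fix \<sigma> :: "nat \<Rightarrow> nat"
    have ne: "[1..<Suc n] \<noteq> []" using assms by simp
    have "hd (map \<sigma> [1..<Suc n]) = \<sigma> 1" using ne assms by (simp add: hd_map upt_conv_Cons del: upt_Suc)
    moreover have "last (map \<sigma> [1..<Suc n]) = \<sigma> n" using ne assms by (simp add: last_map)
    ultimately show "cyc_alternating n \<sigma> \<longleftrightarrow>
     (\<lambda>xs. altl xs \<and> hd xs < last xs) (map \<sigma> [1..<Suc n])"
      unfolding cyc_alternating_def alternating_iff by auto
  qed
  then show ?thesis unfolding A0_def
    using perm_list_card[of n "\<lambda>xs. altl xs \<and> hd xs < last xs"] by simp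
qed

lemma A0_eq:
  assumes m1: "1 \<le> m"
  shows "A0 (2*m) = m * g (2*m - 1)"
proof -
  define N where "N = 2*m - 1"
  define M where "M = 2*m"
  have MN: "M = Suc N" and oN: "odd N" using m1 unfolding M_def N_def by auto
  define C where "C = {xs. set xs = {1..2*m} \<and> distinct xs \<and> (altl xs \<and> hd xs < last xs)}"
  define \<Psi> where "\<Psi> = (\<lambda>(q::nat, ws::nat list). drop (N - Suc (2*q)) ws @ M # take (N - Suc (2*q)) ws)"
  have A0C: "A0 (2*m) = card C" unfolding C_def using A0_eq_list m1 by simp
  have setM: "{1..2*m} = insert M {1..N}" unfolding MN M_def[symmetric] by auto
  have img: "C = \<Psi> ` ({..<m} \<times> Lset {1..N})"
  proof
    show "\<Psi> ` ({..<m} \<times> Lset {1..N}) \<subseteq> C"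
    proof
      fix xs assume "xs \<in> \<Psi> ` ({..<m} \<times> Lset {1..N})"
      then obtain q ws where q: "q < m" and ws: "ws \<in> Lset {1..N}" and xs: "xs = \<Psi> (q, ws)" by auto
      have sw: "set ws = {1..N}" "distinct ws" "altl ws" using ws unfolding Lset_def by auto
      have lw: "length ws = N" using distinct_card[OF sw(2)] sw(1) by simp
      define zs where "zs = take (N - Suc (2*q)) ws"
      define ys where "ys = drop (N - Suc (2*q)) ws"
      have wzy: "ws = zs @ ys" unfolding zs_def ys_def by simp
      have xe: "xs = ys @ M # zs" using xs unfolding \<Psi>_def ys_def zs_def by simp
      have pN: "Suc (2*q) \<le> N" using q unfolding N_def by simp
      have ly: "length ys = Suc (2*q)" unfolding ys_def using lw pN by simp
      have lz: "length zs = N - Suc (2*q)" unfolding zs_def using lw pN by simp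
      have ely: "odd (length ys)" using ly by simp
      have elz: "even (length zs)" using lz oN pN by simp
      have su: "set ys \<union> set zs = {1..N}" using sw(1) wzy by auto
      have lt: "\<forall>x\<in>set ys \<union> set zs. x < M" unfolding su MN by auto
      have "altl (zs @ ys)" using sw wzy by simp
      then have alt: "altl xs \<and> hd xs < last xs" using altl_cyc[OF lt ely elz] xe by simp
      have "set xs = {1..2*m}" using xe sw wzy setM by auto
      moreover have "distinct xs" using xe sw wzy lt by auto
      ultimately show "xs \<in> C" unfolding C_def using alt by simp
    qed
  next
    show "C \<subseteq> \<Psi> ` ({..<m} \<times> Lset {1..N})"
    proof
      fix xs assume "xs \<in> C"
      then have sx: "set xs = {1..2*m}" "distinct xs" "altl xs" "hd xs < last xs"
        unfolding C_def by auto
      have lx: "length xs = 2*m" using distinct_card[OF sx(2)] sx(1) by simp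
      have "M \<in> set xs" using sx m1 unfolding M_def by simp
      then obtain ys zs where e: "xs = ys @ M # zs" using split_list by metis
      have Mn: "M \<notin> set ys" "M \<notin> set zs" using sx e by auto
      have s1: "set ys \<union> set zs = set xs - {M}" using e Mn by auto
      have s2: "{1..2*m} - {M} = {1..N}" unfolding setM MN by auto
      have sub: "set ys \<union> set zs = {1..N}" using s1 s2 sx(1) by simp
      have lt: "\<forall>x\<in>set ys \<union> set zs. x < M" using sub MN by auto
      have "odd (length ys) \<or> (ys = [] \<and> zs = [])" using altl_max_pos[OF lt] sx e by simp
      moreover have "\<not> (ys = [] \<and> zs = [])" using lx e m1 by auto
      ultimately have ol: "odd (length ys)" by blast
      then obtain q where q: "length ys = Suc (2*q)" by (metis oddE Suc_eq_plus1)
      have lyz: "length ys + length zs = N" using lx e unfolding N_def by simp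
      have qm: "q < m" using lyz q unfolding N_def by simp
      have elz: "even (length zs)" using lyz ol oN by (metis even_add)
      have alt: "altl (zs @ ys)" using altl_cyc[OF lt ol elz] sx e by simp
      have dz: "distinct (zs @ ys)" using sx e by auto
      have ws: "zs @ ys \<in> Lset {1..N}" unfolding Lset_def using alt dz sub by auto
      have lz: "length zs = N - Suc (2*q)" using lyz q by simp
      have "\<Psi> (q, zs @ ys) = xs" unfolding \<Psi>_def e using lz by simp
      then show "xs \<in> \<Psi> ` ({..<m} \<times> Lset {1..N})" using qm ws by force
    qed
  qed
  have inj: "inj_on \<Psi> ({..<m} \<times> Lset {1..N})"
  proof (rule inj_onI)
    fix p p' assume p: "p \<in> {..<m} \<times> Lset {1..N}" and p': "p' \<in> {..<m} \<times> Lset {1..N}"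
      and eq: "\<Psi> p = \<Psi> p'"
    obtain q ws where pe: "p = (q, ws)" by (metis prod.collapse)
    obtain q' ws' where pe': "p' = (q', ws')" by (metis prod.collapse)
    have sw: "set ws = {1..N}" "set ws' = {1..N}" "q < m" "q' < m"
      using p p' pe pe' unfolding Lset_def by auto
    have dw: "distinct ws" "distinct ws'" using p p' pe pe' unfolding Lset_def by auto
    have lw: "length ws = N" "length ws' = N"
      using distinct_card[OF dw(1)] distinct_card[OF dw(2)] sw by auto
    have "M \<notin> set ws" using sw MN by auto
    then have n1: "M \<notin> set (drop (N - Suc (2*q)) ws)" "M \<notin> set (take (N - Suc (2*q)) ws)"
      by (meson in_set_dropD in_set_takeD)+
    have "drop (N - Suc (2*q)) ws @ M # take (N - Suc (2*q)) ws =
          drop (N - Suc (2*q')) ws' @ M # take (N - Suc (2*q')) ws'"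
      using eq pe pe' unfolding \<Psi>_def by simp
    then have e2: "drop (N - Suc (2*q)) ws = drop (N - Suc (2*q')) ws'"
       "take (N - Suc (2*q)) ws = take (N - Suc (2*q')) ws'"
      using append_Cons_eq_iff[OF n1] by blast+
    have pN: "Suc (2*q) \<le> N" "Suc (2*q') \<le> N" using sw unfolding N_def by auto
    have "Suc (2*q) = Suc (2*q')" using arg_cong[OF e2(1), of length] lw pN by simp
    then have "q = q'" by simp
    moreover have "ws = ws'" using e2 \<open>q = q'\<close>
      by (metis append_take_drop_id)
    ultimately show "p = p'" using pe pe' by simp
  qed
  have "card C = card ({..<m} \<times> Lset {1..N})" unfolding img by (rule card_image[OF inj])
  also have "\<dots> = m * g N" using card_Lset[of "{1..N}"] by (simp add: card_cartesian_product)
  finally show ?thesis using A0C N_def by simp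
qed


definition aa :: "nat \<Rightarrow> real" where "aa n = real (g n) / fact n"

lemma aa_0: "aa 0 = 1" and aa_1: "aa 1 = 1"
  by (simp_all add: aa_def)

lemma aa_rec:
  assumes "n \<noteq> 0"
  shows "real (Suc n) * aa (Suc n) = (\<Sum>k\<in>{k. k \<le> n \<and> odd k}. aa k * aa (n - k))"
proof -
  have "real (Suc n) * aa (Suc n) = real (g (Suc n)) / fact n"
  proof -
    have nz: "real (Suc n) \<noteq> 0" by (simp only: of_nat_eq_0_iff)
    have "real (Suc n) * aa (Suc n) = real (Suc n) * (real (g (Suc n)) / (real (Suc n) * fact n))"
      unfolding aa_def fact_Suc by (simp only: of_nat_mult)
    also have "\<dots> = real (g (Suc n)) / fact n" by (metis nz nonzero_mult_divide_mult_cancel_left times_divide_eq_right)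
    finally show ?thesis .
  qed
  also have "\<dots> = (\<Sum>k\<in>{k. k \<le> n \<and> odd k}. real (n choose k) * real (g k) * real (g (n - k))) / fact n"
    using assms by simp
  also have "\<dots> = (\<Sum>k\<in>{k. k \<le> n \<and> odd k}. aa k * aa (n - k))"
    unfolding sum_divide_distrib
  proof (rule sum.cong[OF refl])
    fix k assume "k \<in> {k. k \<le> n \<and> odd k}"
    then have kn: "k \<le> n" by simp
    show "real (n choose k) * real (g k) * real (g (n - k)) / fact n = aa k * aa (n - k)"
      unfolding aa_def binomial_fact[OF kn] by (simp add: field_simps)
  qed
  finally show ?thesis .
qed

definition EE :: "complex fps" where "EE = Abs_fps (\<lambda>n. complex_of_real (aa n))"
definition TT :: "complex fps" where "TT = Abs_fps (\<lambda>n. if odd n then EE $ n else 0)"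
definition negf :: "complex fps \<Rightarrow> complex fps" where "negf X = Abs_fps (\<lambda>n. (-1)^n * X $ n)"

lemma EE_nth: "EE $ n = of_real (aa n)" by (simp add: EE_def)
lemma TT_nth: "TT $ n = (if odd n then of_real (aa n) else 0)" by (simp add: TT_def EE_nth)

lemma EE_deriv: "fps_deriv EE = 1 + TT * EE"
proof (rule fps_ext)
  fix n
  show "fps_deriv EE $ n = (1 + TT * EE) $ n"
  proof (cases "n = 0")
    case True
    then show ?thesis by (simp add: EE_def TT_def fps_mult_nth aa_def)
  next
    case False
    have "fps_deriv EE $ n = of_real (real (Suc n) * aa (Suc n))" by (simp add: EE_def)
    also have "\<dots> = of_real (\<Sum>k\<in>{k. k \<le> n \<and> odd k}. aa k * aa (n - k))"
      using aa_rec[OF False] by simp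
    also have "\<dots> = (\<Sum>k\<in>{k. k \<le> n \<and> odd k}. of_real (aa k) * of_real (aa (n - k)))"
      by simp
    also have "\<dots> = (\<Sum>k\<in>{0..n}. (if odd k then of_real (aa k) else 0) * of_real (aa (n - k)))"
    proof -
      have "{k. k \<le> n \<and> odd k} = {k \<in> {0..n}. odd k}" by auto
      then have "(\<Sum>k\<in>{k. k \<le> n \<and> odd k}. of_real (aa k) * of_real (aa (n - k)))
         = (\<Sum>k\<in>{k \<in> {0..n}. odd k}. of_real (aa k) * (of_real (aa (n - k)) :: complex))"
        by simp
      also have "\<dots> = (\<Sum>k\<in>{0..n}. if odd k then of_real (aa k) * of_real (aa (n - k)) else (0::complex))"
        by (rule sum.inter_filter) simp
      also have "\<dots> = (\<Sum>k\<in>{0..n}. (if odd k then of_real (aa k) else 0) * of_real (aa (n - k)))"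
        by (rule sum.cong) auto
      finally show ?thesis .
    qed
    also have "\<dots> = (1 + TT * EE) $ n" using False by (simp add: fps_mult_nth EE_nth TT_nth)
    finally show ?thesis .
  qed
qed

lemma negf_mult: "negf (X * Y) = negf X * negf Y"
proof (rule fps_ext)
  fix n
  have "negf (X * Y) $ n = (\<Sum>i=0..n. (-1)^n * (X$i * Y$(n-i)))"
    by (simp add: negf_def fps_mult_nth sum_distrib_left)
  also have "\<dots> = (\<Sum>i=0..n. ((-1)^i * X$i) * ((-1)^(n-i) * Y$(n-i)))"
  proof (rule sum.cong[OF refl])
    fix i assume "i \<in> {0..n}"
    then have "(-1::complex)^n = (-1)^i * (-1)^(n-i)" by (simp flip: power_add)
    then show "(-1)^n * (X$i * Y$(n-i)) = ((-1)^i * X$i) * ((-1)^(n-i) * Y$(n-i))" by simp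
  qed
  also have "\<dots> = (negf X * negf Y) $ n" by (simp add: negf_def fps_mult_nth)
  finally show "negf (X * Y) $ n = (negf X * negf Y) $ n" .
qed

lemma negf_add: "negf (X + Y) = negf X + negf Y"
  by (rule fps_ext) (simp add: negf_def algebra_simps)

lemma negf_1: "negf 1 = 1"
  by (rule fps_ext) (simp add: negf_def)

lemma negf_deriv: "fps_deriv (negf X) = - negf (fps_deriv X)"
  by (rule fps_ext) (simp add: negf_def)

lemma negf_TT: "negf TT = - TT"
  by (rule fps_ext) (simp add: negf_def TT_def)

lemma EE_negf: "EE - negf EE = 2 * TT"
  by (rule fps_ext) (auto simp: negf_def TT_def numeral_fps_const)

lemma fps_zero_by_deriv:
  fixes Q R :: "complex fps"
  assumes "fps_deriv Q = R * Q" "Q $ 0 = 0"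
  shows "Q = 0"
proof -
  have "\<forall>k\<le>n. Q $ k = 0" for n
  proof (induction n)
    case 0 then show ?case using assms by simp
  next
    case (Suc n)
    have "fps_deriv Q $ n = (R * Q) $ n" using assms by simp
    also have "\<dots> = (\<Sum>i=0..n. R$i * Q$(n-i))" by (simp add: fps_mult_nth)
    also have "\<dots> = 0" using Suc.IH by (intro sum.neutral) auto
    finally have "of_nat (n+1) * Q $ (n+1) = 0" by simp
    then have "Q $ Suc n = 0" by (metis mult_eq_0_iff of_nat_eq_0_iff nat.distinct(1) Suc_eq_plus1)
    then show ?case using Suc.IH le_Suc_eq by auto
  qed
  then show ?thesis by (intro fps_ext) auto
qed

lemma EE_ode: "2 * fps_deriv EE = 1 + EE * EE"
proof -
  define En where "En = negf EE"
  define P where "P = En * EE"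
  have dE: "fps_deriv EE = 1 + TT * EE" by (rule EE_deriv)
  have dEn: "fps_deriv En = - 1 + TT * En"
    unfolding En_def negf_deriv dE negf_add negf_1 negf_mult negf_TT by simp
  have EEn: "En = EE - 2 * TT" using EE_negf unfolding En_def by (simp add: algebra_simps)
  have "fps_deriv (1 - P) = - (fps_deriv En * EE + En * fps_deriv EE)"
    unfolding P_def by (simp add: algebra_simps)
  also have "\<dots> = (2 * TT) * (1 - P)"
    unfolding dEn dE P_def using EEn by (simp add: algebra_simps)
  finally have "fps_deriv (1 - P) = (2 * TT) * (1 - P)" .
  moreover have "(1 - P) $ 0 = 0"
    unfolding P_def En_def by (simp add: negf_def EE_def aa_0)
  ultimately have "1 - P = 0" by (rule fps_zero_by_deriv)
  then have P1: "P = 1" by simp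
  have "2 * fps_deriv EE = 2 + (2 * TT) * EE" unfolding dE by (simp add: algebra_simps)
  also have "\<dots> = 2 + (EE - En) * EE" using EEn by simp
  also have "\<dots> = 2 + EE * EE - P" unfolding P_def by (simp add: algebra_simps)
  also have "\<dots> = 1 + EE * EE" using P1 by simp
  finally show ?thesis .
qed



lemma ode_unique:
  fixes X Y :: "complex fps"
  assumes "2 * fps_deriv X = 1 + X * X" "2 * fps_deriv Y = 1 + Y * Y" "X $ 0 = Y $ 0"
  shows "X = Y"
proof -
  have two: "(2::complex fps) = fps_const 2" by (simp add: numeral_fps_const)
  have key: "2 * (of_nat (Suc n) * Z $ Suc n) = (1::complex fps) $ n + (\<Sum>i=0..n. Z$i * Z$(n-i))"
    if "2 * fps_deriv Z = 1 + Z * Z" for Z :: "complex fps" and n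
  proof -
    have "(fps_const 2 * fps_deriv Z) $ n = (1 + Z * Z) $ n" using that two by simp
    moreover have "(fps_const 2 * fps_deriv Z) $ n = 2 * (of_nat (n+1) * Z $ (n+1))"
      by (simp only: fps_mult_left_const_nth fps_deriv_nth)
    moreover have "(1 + Z * Z) $ n = (1::complex fps) $ n + (\<Sum>i=0..n. Z$i * Z$(n-i))"
      by (simp only: fps_add_nth fps_mult_nth)
    ultimately show ?thesis by (simp only: Suc_eq_plus1)
  qed
  have "\<forall>k\<le>n. X $ k = Y $ k" for n
  proof (induction n)
    case 0 then show ?case using assms by simp
  next
    case (Suc n)
    have "(\<Sum>i=0..n. X$i * X$(n-i)) = (\<Sum>i=0..n. Y$i * Y$(n-i))"
      using Suc.IH by (intro sum.cong) auto
    then have "2 * (of_nat (Suc n) * X $ Suc n) = 2 * (of_nat (Suc n) * Y $ Suc n)"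
      using key[OF assms(1), of n] key[OF assms(2), of n] by (simp only:)
    then have e: "of_nat (Suc n) * X $ Suc n = of_nat (Suc n) * Y $ Suc n" by (rule mult_left_cancel[THEN iffD1, rotated]) simp
    have nz: "(of_nat (Suc n) :: complex) \<noteq> 0" by (simp only: of_nat_eq_0_iff)
    have "X $ Suc n = Y $ Suc n" using mult_left_cancel[OF nz] e by blast
    then show ?case using Suc.IH le_Suc_eq by auto
  qed
  then show ?thesis by (intro fps_ext) auto
qed


definition z0 :: complex where "z0 = of_real (pi/2)"
definition FF :: "complex \<Rightarrow> complex" where
  "FF z = cos ((z0 - z)/2) / sin ((z0 - z)/2)"

lemma sin_nz:
  assumes "norm z < 3" "z \<noteq> z0"
  shows "sin ((z0 - z)/2) \<noteq> 0"
proof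
  assume "sin ((z0 - z)/2) = 0"
  then obtain n :: int where n: "(z0 - z)/2 = of_real (n * pi)" by (auto simp: sin_eq_0)
  then have z: "z = of_real (pi/2 - 2 * n * pi)" unfolding z0_def by (simp add: field_simps)
  have "n \<noteq> 0" using z assms(2) unfolding z0_def by auto
  have "\<bar>pi/2 - 2 * n * pi\<bar> < 3" using assms(1) z by (simp only: norm_of_real)
  moreover have "\<bar>pi/2 - 2 * n * pi\<bar> \<ge> 3 * pi / 2"
  proof -
    have eq: "2 * real_of_int n * pi = 2 * (real_of_int n * pi)" by simp
    show ?thesis
    proof (cases "n \<ge> 1")
      case True
      then have "real_of_int n * pi \<ge> 1 * pi" by (intro mult_right_mono) auto
      then have "pi/2 - 2 * real_of_int n * pi \<le> - (3 * pi / 2)" using eq by linarith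
      then show ?thesis by linarith
    next
      case False
      then have "n \<le> -1" using \<open>n \<noteq> 0\<close> by simp
      then have "real_of_int n * pi \<le> -1 * pi" by (intro mult_right_mono) auto
      then have "pi/2 - 2 * real_of_int n * pi \<ge> 3 * pi / 2" using eq pi_gt_zero by linarith
      then show ?thesis by linarith
    qed
  qed
  moreover have "3 < pi" using pi_gt3 by simp
  ultimately show False by simp
qed

lemma FF_holo: "FF holomorphic_on ball 0 1"
proof -
  have "\<And>z. z \<in> ball 0 1 \<Longrightarrow> sin ((z0 - z)/2) \<noteq> 0"
  proof -
    fix z :: complex assume "z \<in> ball 0 1"
    moreover have "norm z0 > 1" unfolding z0_def using pi_gt3 by simp
    ultimately show "sin ((z0 - z)/2) \<noteq> 0" by (intro sin_nz) auto
  qed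
  then show ?thesis unfolding FF_def by (intro holomorphic_intros) auto
qed

lemma FF_deriv:
  assumes "z \<in> ball 0 1"
  shows "2 * deriv FF z = 1 + FF z * FF z"
proof -
  define w where "w = (z0 - z)/2"
  have nz: "sin w \<noteq> 0" unfolding w_def
  proof (rule sin_nz)
    show "norm z < 3" using assms by simp
    have "norm z0 > 1" unfolding z0_def using pi_gt3 by simp
    then show "z \<noteq> z0" using assms by auto
  qed
  have "(FF has_field_derivative
      ((- sin w * (- 1/2)) * sin w - cos w * (cos w * (- 1/2))) / (sin w * sin w)) (at z)"
    unfolding FF_def w_def
    by (rule derivative_eq_intros refl | use nz in \<open>simp add: w_def\<close>)+
  then have "deriv FF z = ((- sin w * (- 1/2)) * sin w - cos w * (cos w * (- 1/2))) / (sin w * sin w)"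
    by (rule DERIV_imp_deriv)
  also have "\<dots> = 1 / (2 * (sin w * sin w))"
    using nz sin_cos_squared_add3[of w] by (simp add: field_simps)
  finally have d: "deriv FF z = 1 / (2 * (sin w * sin w))" .
  have "1 + FF z * FF z = (sin w * sin w + cos w * cos w) / (sin w * sin w)"
    unfolding FF_def w_def[symmetric] using nz by (simp add: field_simps)
  also have "\<dots> = 1 / (sin w * sin w)" using sin_cos_squared_add3[of w] by (simp add: add.commute)
  finally have f2: "1 + FF z * FF z = 1 / (sin w * sin w)" .
  have d2: "2 * deriv FF z = 1 / (sin w * sin w)" using d nz by simp
  show ?thesis using d2 f2 by simp
qed

lemma has_fps_expansion_cong_ev:
  assumes "f1 has_fps_expansion F" "eventually (\<lambda>z. f1 z = f2 z) (nhds 0)"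
  shows "f2 has_fps_expansion F"
  using assms unfolding has_fps_expansion_def
  by (auto elim: eventually_elim2)

definition SS :: "complex fps" where "SS = fps_expansion FF 0"

lemma SS_exp: "FF has_fps_expansion SS"
  unfolding SS_def by (rule has_fps_expansion_fps_expansion[OF _ _ FF_holo]) auto

lemma FF_0: "FF 0 = 1"
proof -
  have e: "(z0 - 0)/2 = of_real (pi/4)" unfolding z0_def by simp
  have c: "cos (complex_of_real (pi/4)) = of_real (sqrt 2/2)" by (simp only: cos_of_real cos_45)
  have s: "sin (complex_of_real (pi/4)) = of_real (sqrt 2/2)" by (simp only: sin_of_real sin_45)
  have nz: "(of_real (sqrt 2/2) :: complex) \<noteq> 0" by (simp only: of_real_eq_0_iff) simp
  show ?thesis unfolding FF_def e c s using nz by (rule divide_self)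
qed

lemma SS_eq_EE: "SS = EE"
proof (rule ode_unique)
  have e1: "(\<lambda>z. 2 * deriv FF z) has_fps_expansion fps_const 2 * fps_deriv SS"
    by (intro has_fps_expansion_cmult_left has_fps_expansion_deriv SS_exp)
  have e2: "(\<lambda>z. 1 + FF z * FF z) has_fps_expansion 1 + SS * SS"
    by (intro has_fps_expansion_add has_fps_expansion_1 has_fps_expansion_mult SS_exp)
  have "eventually (\<lambda>z. z \<in> ball 0 1) (nhds (0::complex))" by (rule eventually_nhds_in_open) auto
  then have ev: "eventually (\<lambda>z. 2 * deriv FF z = 1 + FF z * FF z) (nhds 0)"
    by (rule eventually_mono) (rule FF_deriv)
  have "fps_const 2 * fps_deriv SS = 1 + SS * SS"
    using fps_expansion_unique_complex[OF has_fps_expansion_cong_ev[OF e1 ev] e2] .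
  then show "2 * fps_deriv SS = 1 + SS * SS" by (simp add: numeral_fps_const)
  show "2 * fps_deriv EE = 1 + EE * EE" by (rule EE_ode)
  show "SS $ 0 = EE $ 0" using fps_nth_fps_expansion[OF SS_exp, of 0] FF_0 by (simp add: EE_nth aa_0)
qed

definition sf :: "complex \<Rightarrow> complex" where "sf z = sin ((z0 - z)/2)"
definition Qf :: "complex \<Rightarrow> complex" where
  "Qf z = (if z = z0 then deriv sf z0 else (sf z - sf z0) / (z - z0))"
definition Nf :: "complex \<Rightarrow> complex" where "Nf z = cos ((z0 - z)/2) + 2 * Qf z"
definition Rf :: "complex \<Rightarrow> complex" where
  "Rf z = (if z = z0 then deriv Nf z0 else (Nf z - Nf z0) / (z - z0))"
definition hf :: "complex \<Rightarrow> complex" where "hf z = Rf z / Qf z"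

lemma sf_holo: "sf holomorphic_on UNIV"
  unfolding sf_def by (intro holomorphic_intros) simp_all

lemma sf_z0: "sf z0 = 0" unfolding sf_def by simp

lemma deriv_sf: "deriv sf z0 = - 1/2"
proof -
  have "(sf has_field_derivative (cos ((z0 - z0)/2) * (- 1/2))) (at z0)"
    unfolding sf_def by (rule derivative_eq_intros refl | simp)+
  then show ?thesis by (simp add: DERIV_imp_deriv)
qed

lemma Qf_holo: "Qf holomorphic_on UNIV"
proof -
  have "(\<lambda>z. if z = z0 then deriv sf z0 else (sf z - sf z0) / (z - z0)) holomorphic_on UNIV"
    by (rule pole_lemma_open[OF sf_holo]) simp
  then show ?thesis unfolding Qf_def[abs_def] .
qed

lemma Nf_holo: "Nf holomorphic_on UNIV"
proof -
  have c: "(\<lambda>z. cos ((z0 - z)/2)) holomorphic_on UNIV" by (intro holomorphic_intros) simp_all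
  have "(\<lambda>z. cos ((z0 - z)/2) + 2 * Qf z) holomorphic_on UNIV"
    by (rule holomorphic_on_add[OF c holomorphic_on_mult[OF holomorphic_on_const Qf_holo]])
  then show ?thesis unfolding Nf_def[abs_def] .
qed

lemma Nf_z0: "Nf z0 = 0"
  unfolding Nf_def Qf_def deriv_sf by simp

lemma Rf_holo: "Rf holomorphic_on UNIV"
proof -
  have "(\<lambda>z. if z = z0 then deriv Nf z0 else (Nf z - Nf z0) / (z - z0)) holomorphic_on UNIV"
    by (rule pole_lemma_open[OF Nf_holo]) simp
  then show ?thesis unfolding Rf_def[abs_def] .
qed

lemma Qf_nz:
  assumes "norm z < 3"
  shows "Qf z \<noteq> 0"
proof (cases "z = z0")
  case True then show ?thesis unfolding Qf_def deriv_sf by simp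
next
  case False
  then have "sf z \<noteq> 0" unfolding sf_def using sin_nz assms by blast
  then show ?thesis unfolding Qf_def using False sf_z0 by simp
qed

lemma hf_holo: "hf holomorphic_on ball 0 3"
proof -
  have "(\<lambda>z. Rf z / Qf z) holomorphic_on ball 0 3"
    using Rf_holo Qf_holo Qf_nz by (intro holomorphic_intros) (auto intro: holomorphic_on_subset)
  then show ?thesis unfolding hf_def[abs_def] .
qed

lemma key_identity:
  assumes "z \<in> ball 0 1"
  shows "(z0 - z) * (FF z - hf z) = 2"
proof -
  have "norm z0 > 1" unfolding z0_def using pi_gt3 by simp
  then have zz: "z \<noteq> z0" using assms by auto
  then have nz: "z - z0 \<noteq> 0" by simp
  have q: "Qf z \<noteq> 0" using assms by (intro Qf_nz) auto
  have s: "sin ((z0 - z)/2) = (z - z0) * Qf z"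
    unfolding Qf_def using zz nz sf_z0 by (simp add: sf_def)
  have r: "Nf z = (z - z0) * Rf z"
    unfolding Rf_def using zz nz Nf_z0 by simp
  have c: "cos ((z0 - z)/2) = (z - z0) * Rf z - 2 * Qf z"
    using r unfolding Nf_def by (simp add: algebra_simps)
  have "FF z - hf z = ((z - z0) * Rf z - 2 * Qf z) / ((z - z0) * Qf z) - Rf z / Qf z"
    unfolding FF_def hf_def s c ..
  also have "\<dots> = - 2 / (z - z0)" using nz q by (simp add: field_simps)
  finally show ?thesis using nz by (simp add: field_simps)
qed

definition HH :: "complex fps" where "HH = fps_expansion hf 0"

lemma HH_exp: "hf has_fps_expansion HH"
  unfolding HH_def by (rule has_fps_expansion_fps_expansion[OF _ _ hf_holo]) auto

lemma W_eq: "(fps_const z0 - fps_X) * (SS - HH) = fps_const 2"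
proof -
  have e1: "(\<lambda>z. (z0 - z) * (FF z - hf z)) has_fps_expansion (fps_const z0 - fps_X) * (SS - HH)"
    by (intro has_fps_expansion_mult has_fps_expansion_diff has_fps_expansion_const
        has_fps_expansion_fps_X SS_exp HH_exp)
  have "eventually (\<lambda>z. z \<in> ball 0 1) (nhds (0::complex))" by (rule eventually_nhds_in_open) auto
  then have ev: "eventually (\<lambda>z. (z0 - z) * (FF z - hf z) = 2) (nhds 0)"
    by (rule eventually_mono) (rule key_identity)
  show ?thesis
    using fps_expansion_unique_complex[OF has_fps_expansion_cong_ev[OF e1 ev] has_fps_expansion_const] .
qed

lemma W_nth: "(SS - HH) $ n = 2 / z0 ^ Suc n"
proof (induction n)
  have nz: "z0 \<noteq> 0" unfolding z0_def by simp
  {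
    fix n
    have "((fps_const z0 - fps_X) * (SS - HH)) $ n = z0 * (SS - HH) $ n - (if n = 0 then 0 else (SS - HH) $ (n - 1))"
      by (simp only: left_diff_distrib fps_sub_nth fps_mult_left_const_nth fps_X_mult_nth)
    then have "z0 * (SS - HH) $ n - (if n = 0 then 0 else (SS - HH) $ (n - 1)) = (if n = 0 then 2 else 0)"
      unfolding W_eq by simp
  } note rec = this
  case 0
  show ?case using rec[of 0] nz by (simp add: field_simps)
next
  case (Suc n)
  have nz: "z0 \<noteq> 0" unfolding z0_def by simp
  have "z0 * (SS - HH) $ Suc n - (SS - HH) $ n = 0"
    using W_eq fps_sub_nth[of "fps_const z0 * (SS - HH)" "fps_X * (SS - HH)" "Suc n"]
    by (simp add: left_diff_distrib)
  then have "(SS - HH) $ Suc n = (SS - HH) $ n / z0" using nz by (simp add: field_simps)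
  also have "\<dots> = (2 / z0 ^ Suc n) / z0" unfolding Suc.IH ..
  also have "\<dots> = 2 / z0 ^ Suc (Suc n)" by (simp only: divide_divide_eq_left power_Suc2[of z0 "Suc n"])
  finally show ?case .
qed

lemma HH_bound: "\<exists>B. \<forall>n. norm (HH $ n) \<le> B / 2 ^ n"
proof -
  have sub: "cball (0::complex) 2 \<subseteq> ball 0 3" by auto
  have cont: "continuous_on (cball 0 2) hf"
    using holomorphic_on_imp_continuous_on[OF hf_holo] sub continuous_on_subset by blast
  have "compact (hf ` cball 0 2)" by (rule compact_continuous_image[OF cont]) simp
  then obtain B where B: "\<forall>x\<in>hf ` cball 0 2. norm x \<le> B"
    using compact_imp_bounded bounded_iff by metis
  have "norm (HH $ n) \<le> B / 2 ^ n" for n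
  proof -
    have cau: "norm ((deriv ^^ n) hf 0) \<le> fact n * B / 2 ^ n"
    proof (rule Cauchy_inequality)
      show "hf holomorphic_on ball 0 2" using hf_holo by (rule holomorphic_on_subset) auto
      show "continuous_on (cball 0 2) hf" by (rule cont)
      show "\<And>x. norm (0 - x) = 2 \<Longrightarrow> norm (hf x) \<le> B" using B by auto
    qed simp
    have eq: "HH $ n = (deriv ^^ n) hf 0 / fact n" by (rule fps_nth_fps_expansion[OF HH_exp])
    have "norm (HH $ n) = norm ((deriv ^^ n) hf 0) / fact n" unfolding eq by (simp add: norm_divide)
    also have "\<dots> \<le> (fact n * B / 2 ^ n) / fact n" by (rule divide_right_mono[OF cau]) simp
    also have "\<dots> = B / 2 ^ n" by simp
    finally show ?thesis .
  qed
  then show ?thesis by blast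
qed

lemma aa_bound: "\<exists>B. \<forall>n. \<bar>aa n - 2 / (pi/2) ^ Suc n\<bar> \<le> B / 2 ^ n"
proof -
  obtain B where B: "\<forall>n. norm (HH $ n) \<le> B / 2 ^ n" using HH_bound by blast
  have "\<bar>aa n - 2 / (pi/2) ^ Suc n\<bar> \<le> B / 2 ^ n" for n
  proof -
    have "of_real (aa n) = SS $ n" using SS_eq_EE by (simp add: EE_nth)
    also have "\<dots> = (SS - HH) $ n + HH $ n" by simp
    also have "\<dots> = of_real (2 / (pi/2) ^ Suc n) + HH $ n" unfolding W_nth z0_def by simp
    finally have "HH $ n = of_real (aa n - 2 / (pi/2) ^ Suc n)" by simp
    then show ?thesis using B by (metis norm_of_real)
  qed
  then show ?thesis by blast
qed


definition xx :: "nat \<Rightarrow> real" where "xx n = aa n * (pi/2) ^ Suc n"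

lemma xx_lim: "xx \<longlonglongrightarrow> 2"
proof -
  obtain B where B: "\<forall>n. \<bar>aa n - 2 / (pi/2) ^ Suc n\<bar> \<le> B / 2 ^ n" using aa_bound by blast
  have pp: "(pi/2) ^ Suc n > 0" for n by simp
  have bnd: "norm (xx n - 2) \<le> B * (pi/2) * (pi/4) ^ n" for n
  proof -
    have "xx n - 2 = (aa n - 2 / (pi/2) ^ Suc n) * (pi/2) ^ Suc n"
      unfolding xx_def using pp[of n] by (simp add: field_simps)
    then have "norm (xx n - 2) = \<bar>aa n - 2 / (pi/2) ^ Suc n\<bar> * (pi/2) ^ Suc n"
      using pp[of n] by (simp only: real_norm_def abs_mult abs_of_pos)
    also have "\<dots> \<le> B / 2 ^ n * (pi/2) ^ Suc n"
      using B pp[of n] by (intro mult_right_mono) auto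
    also have "\<dots> = B * (pi/2) * (pi/4) ^ n"
    proof -
      have e: "(pi/4::real)^n = (pi/2)^n / 2^n"
      proof -
        have "(pi/4::real) = (pi/2)/2" by simp
        then show ?thesis by (simp only: power_divide)
      qed
      show ?thesis unfolding e power_Suc by (simp add: field_simps)
    qed
    finally show ?thesis .
  qed
  have "(\<lambda>n. B * (pi/2) * (pi/4) ^ n) \<longlonglongrightarrow> B * (pi/2) * 0"
    by (intro tendsto_intros) (use pi_less_4 pi_gt_zero in auto)
  then have lim0: "(\<lambda>n. B * (pi/2) * (pi/4) ^ n) \<longlonglongrightarrow> 0" by simp
  have "(\<lambda>n. xx n - 2) \<longlonglongrightarrow> 0"
    by (rule Lim_null_comparison[OF _ lim0]) (intro always_eventually allI bnd)
  then show ?thesis by (rule LIM_zero_cancel)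
qed

lemma ratio_aux: "(c::real) \<noteq> 0 \<Longrightarrow> d \<noteq> 0 \<Longrightarrow> (c/2) * (x * d) / (y * (c * d)) = x / (2*y)"
  by (cases "y = 0") (simp_all add: field_simps)

lemma ratio_eq:
  assumes "1 \<le> m"
  shows "real (A0 (2*m)) / real (A (2*m)) = pi/4 * xx (2*m - 1) / xx (2*m)"
proof -
  obtain k where k: "2*m = Suc k" using assms by (cases "2*m") auto
  have km: "2*m - 1 = k" using k by simp
  have mk: "real m = real (Suc k) / 2"
  proof -
    have "real (2*m) = real (Suc k)" using k by (simp only:)
    then show ?thesis by (simp only: of_nat_mult) simp
  qed
  have gk: "real (g n) = aa n * fact n" for n unfolding aa_def by simp
  have "real (A0 (2*m)) / real (A (2*m)) = real m * real (g k) / real (g (Suc k))"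
  proof -
    have a0: "A0 (2*m) = m * g k" using A0_eq[OF assms] km by simp
    have a1: "A (2*m) = g (Suc k)" unfolding k by (rule A_eq)
    show ?thesis unfolding a0 a1 by (simp del: g.simps)
  qed
  also have "\<dots> = aa k / (2 * aa (Suc k))"
  proof -
    have f: "(fact (Suc k) :: real) = real (Suc k) * fact k" by (simp only: fact_Suc of_nat_mult)
    have n1: "real (Suc k) \<noteq> 0" by (simp only: of_nat_eq_0_iff)
    have n2: "(fact k :: real) \<noteq> 0" by simp
    show ?thesis unfolding gk mk f by (rule ratio_aux[OF n1 n2])
  qed
  also have "\<dots> = pi/4 * xx k / xx (Suc k)"
    unfolding xx_def by (cases "aa (Suc k) = 0") (simp_all add: field_simps)
  finally show ?thesis unfolding k by simp
qed

theorem mainTheorem11: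
  shows "(\<lambda>m. real (A0 (2 * m)) / real (A (2 * m))) \<longlonglongrightarrow> pi / 4"
proof -
  have sm1: "strict_mono (\<lambda>m::nat. 2*m - 1)" unfolding strict_mono_Suc_iff by auto
  have sm2: "strict_mono (\<lambda>m::nat. 2*m)" unfolding strict_mono_Suc_iff by auto
  have l1: "(\<lambda>m. xx (2*m - 1)) \<longlonglongrightarrow> 2"
    using LIMSEQ_subseq_LIMSEQ[OF xx_lim sm1] by (simp add: o_def)
  have l2: "(\<lambda>m. xx (2*m)) \<longlonglongrightarrow> 2"
    using LIMSEQ_subseq_LIMSEQ[OF xx_lim sm2] by (simp add: o_def)
  have "(\<lambda>m. pi/4 * xx (2*m - 1) / xx (2*m)) \<longlonglongrightarrow> pi/4 * 2 / 2"
    by (intro tendsto_intros l1 l2) simp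
  then have lim: "(\<lambda>m. pi/4 * xx (2*m - 1) / xx (2*m)) \<longlonglongrightarrow> pi/4" by simp
  have ev: "eventually (\<lambda>m. pi/4 * xx (2*m - 1) / xx (2*m) = real (A0 (2 * m)) / real (A (2 * m))) sequentially"
    using eventually_ge_at_top[of 1] by (rule eventually_mono) (simp add: ratio_eq)
  show ?thesis by (rule Lim_transform_eventually[OF lim ev])
qed

end
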